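(* For all integers $i,N,n$ with $0\le i\le N\le n$, $$\sum_{i_1,i_2}\binom{N}{i_1}\binom{N}{i_2}\binom{i_1}{i}\binom{i_2}{i}(-1)^{i_1+i_2}\,(n-i_1)_{N-i_1}\,(n-i_2)_{N-i_2}\,(n)_{i_1+i_2-i}\;i!=N!\,(n)_N\binom{N}{i}(-1)^{N-i},$$ where the sum is over all integers $i_1,i_2$.
   Context: Convention: the binomial coefficient $\binom{k}{l}$ is defined as the usual binomial coefficient when $k\ge0$, $l\ge0$ and $k\ge l$, and is $0$ otherwise; only terms with $i\le i_1,i_2\le N$ contribute. $(m)_j=m(m-1)\cdots(m-j+1)$ denotes the falling factorial, with $(m)_0=1$. In particular, $(m)_j=0$ when $m$ is a nonnegative integer and $j>m$. *)

theory Defs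
  imports Main
begin

definition ffact :: "int \<Rightarrow> nat \<Rightarrow> int" where
  "ffact m j = (\<Prod>k<j. m - int k)"

end

theory Submission
  imports Defs
begin

lemma ffact_Suc: "ffact m (Suc k) = ffact m k * (m - int k)"
  by (simp add: ffact_def)

lemma ffact_0[simp]: "ffact m 0 = 1"
  by (simp add: ffact_def)

lemma ffact_poch_neg: "ffact x k = (-1)^k * pochhammer (-x) k"
  by (induction k) (simp_all add: ffact_Suc pochhammer_Suc algebra_simps)

lemma ffact_poch: "ffact x k = pochhammer (x - int k + 1) k"
  unfolding ffact_poch_neg pochhammer_minus by simp

lemma ffact_add: "ffact m (a + b) = ffact m a * ffact (m - int a) b"
  unfolding ffact_poch_neg pochhammer_product' by (simp add: power_add)

lemma ffact_Suc': "ffact m (Suc k) = m * ffact (m - 1) k"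
  using ffact_add[of m 1 k] by (simp add: ffact_def)

lemma ffact_zero: "x < k \<Longrightarrow> ffact (int x) k = 0"
  unfolding ffact_def by (rule prod_zero) auto

lemma ffact_fact: "ffact (int x) x = int (fact x)"
  by (induction x) (simp_all add: ffact_Suc' algebra_simps)

lemma vander:
  "(\<Sum>j\<le>M. int (M choose j) * (-1)^j * ffact (a - int j) (M - j) * ffact m j) = ffact (a - m) M"
proof -
  have "ffact (a - m) M = pochhammer (-m + (a - int M + 1)) M"
    by (simp add: ffact_poch algebra_simps)
  also have "\<dots> = (\<Sum>j\<le>M. of_nat (M choose j) * pochhammer (-m) j * pochhammer (a - int M + 1) (M - j))"
    by (rule pochhammer_binomial_sum)
  also have "\<dots> = (\<Sum>j\<le>M. int (M choose j) * (-1)^j * ffact (a - int j) (M - j) * ffact m j)"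
  proof (rule sum.cong[OF refl])
    fix j assume "j \<in> {..M}"
    hence "pochhammer (a - int M + 1) (M - j) = ffact (a - int j) (M - j)"
      by (simp add: ffact_poch of_nat_diff)
    moreover have "pochhammer (-m) j = (-1)^j * ffact m j"
      by (simp add: ffact_poch_neg)
    ultimately show "of_nat (M choose j) * pochhammer (-m) j * pochhammer (a - int M + 1) (M - j) = int (M choose j) * (-1)^j * ffact (a - int j) (M - j) * ffact m j"
      by simp
  qed
  finally show ?thesis by (rule sym)
qed

lemma inner:
  assumes "i \<le> N"
  shows "(\<Sum>i2\<in>{0..N}. int (N choose i2) * int (i2 choose i) * (-1)^i2
           * ffact (int n - int i2) (N - i2) * ffact (int n - int i1) (i2 - i))
         = int (N choose i) * (-1)^i * ffact (int i1 - int i) (N - i)"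
proof -
  let ?f = "\<lambda>i2. int (N choose i2) * int (i2 choose i) * (-1)^i2
           * ffact (int n - int i2) (N - i2) * ffact (int n - int i1) (i2 - i)"
  have "(\<Sum>i2\<in>{0..N}. ?f i2) = (\<Sum>i2\<in>{i..N}. ?f i2)"
    by (rule sum.mono_neutral_right) auto
  also have "\<dots> = (\<Sum>j\<in>{0..N-i}. ?f (j + i))"
    using sum.shift_bounds_cl_nat_ivl[of ?f 0 i "N-i"] assms by simp
  also have "\<dots> = (\<Sum>j\<in>{0..N-i}. int (N choose i) * (-1)^i *
      (int ((N-i) choose j) * (-1)^j * ffact ((int n - int i) - int j) ((N-i) - j) * ffact (int n - int i1) j))"
  proof (rule sum.cong[OF refl])
    fix j assume j: "j \<in> {0..N-i}"
    have c: "(N choose (j+i)) * ((j+i) choose i) = (N choose i) * ((N-i) choose j)"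
      using choose_mult[of i "j+i" N] j assms by auto
    have c': "int (N choose (j+i)) * int ((j+i) choose i) = int (N choose i) * int ((N-i) choose j)"
      using arg_cong[OF c, of int] by simp
    have e: "N - (j+i) = (N-i) - j" "int n - int (j+i) = (int n - int i) - int j" "j + i - i = j" by auto
    show "?f (j+i) = int (N choose i) * (-1)^i *
      (int ((N-i) choose j) * (-1)^j * ffact ((int n - int i) - int j) ((N-i) - j) * ffact (int n - int i1) j)"
      unfolding e power_add using c' by (simp add: algebra_simps)
  qed
  also have "\<dots> = int (N choose i) * (-1)^i * (\<Sum>j\<in>{0..N-i}.
      (int ((N-i) choose j) * (-1)^j * ffact ((int n - int i) - int j) ((N-i) - j) * ffact (int n - int i1) j))"
    by (simp only: sum_distrib_left)
  also have "\<dots> = int (N choose i) * (-1)^i * ffact ((int n - int i) - (int n - int i1)) (N - i)"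
    using vander[of "N-i" "int n - int i" "int n - int i1"] by (simp only: atLeast0AtMost)
  finally show ?thesis by simp
qed

theorem mainTheorem3:
  fixes i N n :: nat
  assumes "i \<le> N" and "N \<le> n"
  shows "(\<Sum>i1\<in>{0..N}. \<Sum>i2\<in>{0..N}.
            int (N choose i1) * int (N choose i2) * int (i1 choose i) * int (i2 choose i)
            * (-1) ^ (i1 + i2)
            * ffact (int n - int i1) (N - i1) * ffact (int n - int i2) (N - i2)
            * ffact (int n) (i1 + i2 - i) * int (fact i))
         = int (fact N) * ffact (int n) N * int (N choose i) * (-1) ^ (N - i)"
proof -
  let ?S = "\<lambda>i1. (\<Sum>i2\<in>{0..N}. int (N choose i2) * int (i2 choose i) * (-1)^i2
           * ffact (int n - int i2) (N - i2) * ffact (int n - int i1) (i2 - i))"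
  let ?g = "\<lambda>i1. int (fact i) * int (N choose i1) * int (i1 choose i) * (-1)^i1 * ffact (int n) N
             * (int (N choose i) * (-1)^i * ffact (int i1 - int i) (N - i))"
  have A: "(\<Sum>i2\<in>{0..N}.
            int (N choose i1) * int (N choose i2) * int (i1 choose i) * int (i2 choose i)
            * (-1) ^ (i1 + i2)
            * ffact (int n - int i1) (N - i1) * ffact (int n - int i2) (N - i2)
            * ffact (int n) (i1 + i2 - i) * int (fact i)) = ?g i1" if i1: "i1 \<in> {0..N}" for i1
  proof (cases "i1 < i")
    case True then show ?thesis by (simp add: binomial_eq_0)
  next
    case False
    have "(\<Sum>i2\<in>{0..N}.
            int (N choose i1) * int (N choose i2) * int (i1 choose i) * int (i2 choose i)
            * (-1) ^ (i1 + i2)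
            * ffact (int n - int i1) (N - i1) * ffact (int n - int i2) (N - i2)
            * ffact (int n) (i1 + i2 - i) * int (fact i))
        = (\<Sum>i2\<in>{0..N}. (int (fact i) * int (N choose i1) * int (i1 choose i) * (-1)^i1 * ffact (int n) N) *
            (int (N choose i2) * int (i2 choose i) * (-1)^i2
           * ffact (int n - int i2) (N - i2) * ffact (int n - int i1) (i2 - i)))"
    proof (rule sum.cong[OF refl])
      fix i2 assume "i2 \<in> {0..N}"
      show "int (N choose i1) * int (N choose i2) * int (i1 choose i) * int (i2 choose i)
            * (-1) ^ (i1 + i2)
            * ffact (int n - int i1) (N - i1) * ffact (int n - int i2) (N - i2)
            * ffact (int n) (i1 + i2 - i) * int (fact i) =
          (int (fact i) * int (N choose i1) * int (i1 choose i) * (-1)^i1 * ffact (int n) N) *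
            (int (N choose i2) * int (i2 choose i) * (-1)^i2
           * ffact (int n - int i2) (N - i2) * ffact (int n - int i1) (i2 - i))"
      proof (cases "i2 < i")
        case True then show ?thesis by (simp add: binomial_eq_0)
      next
        case False
        have e1: "ffact (int n) (i1 + i2 - i) = ffact (int n) i1 * ffact (int n - int i1) (i2 - i)"
          using ffact_add[of "int n" i1 "i2 - i"] False by simp
        have e2: "ffact (int n) N = ffact (int n) i1 * ffact (int n - int i1) (N - i1)"
          using ffact_add[of "int n" i1 "N - i1"] i1 by simp
        show ?thesis unfolding e1 e2 power_add by (simp add: algebra_simps)
      qed
    qed
    also have "\<dots> = ?g i1"
      by (simp add: sum_distrib_left[symmetric] inner assms)
    finally show ?thesis .
  qed
  have "(\<Sum>i1\<in>{0..N}. \<Sum>i2\<in>{0..N}.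
            int (N choose i1) * int (N choose i2) * int (i1 choose i) * int (i2 choose i)
            * (-1) ^ (i1 + i2)
            * ffact (int n - int i1) (N - i1) * ffact (int n - int i2) (N - i2)
            * ffact (int n) (i1 + i2 - i) * int (fact i)) = (\<Sum>i1\<in>{0..N}. ?g i1)"
    using A by (rule sum.cong[OF refl])
  also have "\<dots> = (\<Sum>i1\<in>{N}. ?g i1)"
  proof (rule sum.mono_neutral_right)
    show "\<forall>i1\<in>{0..N} - {N}. ?g i1 = 0"
    proof
      fix i1 assume h: "i1 \<in> {0..N} - {N}"
      show "?g i1 = 0"
      proof (cases "i1 < i")
        case True then show ?thesis by (simp add: binomial_eq_0)
      next
        case False
        have "ffact (int i1 - int i) (N - i) = ffact (int (i1 - i)) (N - i)"
          using False by (simp add: of_nat_diff)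
        also have "\<dots> = 0" using h False by (intro ffact_zero) auto
        finally show ?thesis by simp
      qed
    qed
  qed auto
  also have "\<dots> = int (fact N) * ffact (int n) N * int (N choose i) * (-1) ^ (N - i)"
  proof -
    have f: "ffact (int N - int i) (N - i) = int (fact (N - i))"
      using ffact_fact[of "N-i"] assms by (simp add: of_nat_diff)
    have fN: "fact N = fact i * fact (N - i) * (N choose i)"
      using binomial_fact_lemma[of i N] assms by (simp add: algebra_simps)
    have s: "(-1::int)^N * (-1)^i = (-1)^(N-i)"
    proof -
      have "N = (N - i) + i" using assms by simp
      hence "(-1::int)^N = (-1)^(N-i) * (-1)^i" by (metis power_add)
      moreover have "(-1::int)^i * (-1)^i = 1" by (simp add: power_mult_distrib[symmetric])
      ultimately show ?thesis by (simp add: mult.assoc)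
    qed
    have "(\<Sum>i1\<in>{N}. ?g i1) = ?g N" by simp
    also have "\<dots> = int (fact i) * int (fact (N - i)) * int (N choose i) * ffact (int n) N * int (N choose i) * ((-1)^N * (-1)^i)"
      unfolding f by (simp add: algebra_simps)
    also have "\<dots> = int (fact N) * ffact (int n) N * int (N choose i) * (-1) ^ (N - i)"
      unfolding s fN by (simp add: algebra_simps)
    finally show ?thesis .
  qed
  finally show ?thesis .
qed

end
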